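(* Let $d\ge 3$, let $\mathcal M$ be a model of $\mathrm{PQM}_d$ with domain $\mathbb M$, and let $\kappa:\mathbb M\to\mathbb H_d$ be the function such that for all $m\in\mathbb M$, $p\in\mathbb H_d$: $[m:p]^{\mathcal M}\iff\kappa(m)\le p$. Then $\kappa$ is a strong $\mathcal L_d$-morphism from $\mathcal M$ to $\mathcal H_d$; that is, for all $m\in\mathbb M$: (1) for all $p\in\mathbb H_d$, $[m:p]^{\mathcal M}\iff[\kappa(m):p]^{\mathcal H_d}$; (2) for all $q\in\mathbb H_d$, $\kappa(\pi_q^{\mathcal M}(m))=\kappa(m)\,\&\,q$; (3) for all $U\in\mathbb U_d$, $\kappa(u_U^{\mathcal M}(m))=U(\kappa(m))$.
   Context: Notation. For $d\ge 1$, $\mathbb H_d$ is the set of complex linear subspaces of $\mathbb C^d$, ordered by inclusion $\le$, with $\top=\mathbb C^d$, $\bot=\{0\}$, $p^\bot$ the orthogonal complement, $p\wedge q=p\cap q$ and $p\vee q=p+q$. $\mathbb U_d$ is the set of unitary operators on $\mathbb C^d$, and for $U\in\mathbb U_d$, $p\in\mathbb H_d$, $U(p)=\{Uv: v\in p\}$. The Sasaki projection is $p\,\&\,q := q\cap(q^\bot+p)$. Subspaces $p,q$ are compatible iff $p=(p\wedge q)\vee(p\wedge q^\bot)$. Language $\mathcal L_d$: a first-order language without equality and without constants, having a unary function symbol $u_U$ for each $U\in\mathbb U_d$, a unary function symbol $\pi_q$ for each $q\in\mathbb H_d$, and a unary relation symbol $[\,\cdot:p]$ for each $p\in\mathbb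 H_d$. Theory $\mathrm{PQM}_d$ (over $\mathcal L_d$) has the following axioms, for all $p,q\in\mathbb H_d$ and $U\in\mathbb U_d$: ($\neg\bot$) $\exists x\,\neg[x:\bot]$; ($\top$) $\forall x\,[x:\top]$; ($\le$) if $p\le q$: $\forall x\,([x:p]\to[x:q])$; ($\wedge$) if $p,q$ are compatible: $\forall x\,([x:p]\wedge[x:q]\to[x:p\wedge q])$; ($\pi_i$) $\forall x\,([x:p]\to[\pi_q(x):p\,\&\,q])$; ($\pi_c$) if $p\le q$: $\forall x\,([\pi_p(\pi_q(x)):\bot]\to[\pi_p(x):\bot])$; ($\pi_\bot$) $\forall x\,([\pi_q(x):\bot]\to[x:q^\bot])$; ($u_i$) $\forall x\,([x:p]\to[u_U(x):U(p)])$; ($u_e$) $\forall x\,([u_U(x):p]\to[x:U^{-1}(p)])$. Hilbert model $\mathcal H_d$: the $\mathcal L_d$-structure with domain $\mathbb H_d$, $u_U^{\mathcal H_d}(x)=U(x)$, $\pi_q^{\mathcal H_d}(x)=x\,\&\,q$, and $[x:p]^{\mathcal H_d}$ holds iff $x\le p$. *)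

theory Defs
  imports "HOL-Analysis.Analysis"
begin

text \<open>The Hilbert space C^d is modelled as complex ^ 'n with CARD('n) = d.
  Complex linear subspaces are the subspaces w.r.t. complex scalar multiplication (*s).\<close>

type_synonym 'n cvec = "complex ^ 'n"
type_synonym 'n cmat = "complex ^ 'n ^ 'n"

definition csubspace :: "'n::finite cvec set \<Rightarrow> bool" where
  "csubspace S \<longleftrightarrow> vec.subspace S"

definition cinner :: "'n::finite cvec \<Rightarrow> 'n cvec \<Rightarrow> complex" where
  "cinner x y = (\<Sum>i\<in>UNIV. cnj (x $ i) * y $ i)"

definition orth :: "'n::finite cvec set \<Rightarrow> 'n cvec set" where
  "orth S = {y. \<forall>x\<in>S. cinner x y = 0}"

definition ssum :: "'n::finite cvec set \<Rightarrow> 'n cvec set \<Rightarrow> 'n cvec set" where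
  "ssum A B = {x + y | x y. x \<in> A \<and> y \<in> B}"

text \<open>Sasaki projection p & q = q meet (q-perp join p).\<close>
definition sasaki :: "'n::finite cvec set \<Rightarrow> 'n cvec set \<Rightarrow> 'n cvec set" where
  "sasaki p q = q \<inter> ssum (orth q) p"

definition compatible :: "'n::finite cvec set \<Rightarrow> 'n cvec set \<Rightarrow> bool" where
  "compatible p q \<longleftrightarrow> p = ssum (p \<inter> q) (p \<inter> orth q)"

definition cadj :: "'n::finite cmat \<Rightarrow> 'n cmat" where
  "cadj U = (\<chi> i j. cnj (U $ j $ i))"

definition unitary :: "'n::finite cmat \<Rightarrow> bool" where
  "unitary U \<longleftrightarrow> cadj U ** U = mat 1 \<and> U ** cadj U = mat 1"

definition uimg :: "'n::finite cmat \<Rightarrow> 'n cvec set \<Rightarrow> 'n cvec set" where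
  "uimg U p = (\<lambda>v. U *v v) ` p"

text \<open>An L_d-structure with domain 'm: interpretations uM of u_U, piM of pi_q, and relM of [x:p]
  (only their values at unitary U / subspaces q, p matter).\<close>
definition PQM_model ::
  "('n::finite cmat \<Rightarrow> 'm \<Rightarrow> 'm) \<Rightarrow> ('n cvec set \<Rightarrow> 'm \<Rightarrow> 'm) \<Rightarrow> ('m \<Rightarrow> 'n cvec set \<Rightarrow> bool) \<Rightarrow> bool"
where
  "PQM_model uM piM relM \<longleftrightarrow>
     (\<exists>x. \<not> relM x {0}) \<and>
     (\<forall>x. relM x UNIV) \<and>
     (\<forall>p q x. csubspace p \<and> csubspace q \<and> p \<subseteq> q \<and> relM x p \<longrightarrow> relM x q) \<and>
     (\<forall>p q x. csubspace p \<and> csubspace q \<and> compatible p q \<and> relM x p \<and> relM x q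
        \<longrightarrow> relM x (p \<inter> q)) \<and>
     (\<forall>p q x. csubspace p \<and> csubspace q \<and> relM x p \<longrightarrow> relM (piM q x) (sasaki p q)) \<and>
     (\<forall>p q x. csubspace p \<and> csubspace q \<and> p \<subseteq> q \<and> relM (piM p (piM q x)) {0}
        \<longrightarrow> relM (piM p x) {0}) \<and>
     (\<forall>q x. csubspace q \<and> relM (piM q x) {0} \<longrightarrow> relM x (orth q)) \<and>
     (\<forall>U p x. unitary U \<and> csubspace p \<and> relM x p \<longrightarrow> relM (uM U x) (uimg U p)) \<and>
     (\<forall>U p x. unitary U \<and> csubspace p \<and> relM (uM U x) p \<longrightarrow> relM x (uimg (matrix_inv U) p))"

end

theory Submission imports Defs begin

lemma csub_0: "csubspace S \<Longrightarrow> 0 \<in> S" unfolding csubspace_def by (rule vec.subspace_0)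
lemma csub_add: "csubspace S \<Longrightarrow> x \<in> S \<Longrightarrow> y \<in> S \<Longrightarrow> x + y \<in> S"
  unfolding csubspace_def by (rule vec.subspace_add)
lemma csub_scale: "csubspace S \<Longrightarrow> x \<in> S \<Longrightarrow> c *s x \<in> S"
  unfolding csubspace_def by (rule vec.subspace_scale)
lemma csubI: "0 \<in> S \<Longrightarrow> (\<And>x y. x \<in> S \<Longrightarrow> y \<in> S \<Longrightarrow> x + y \<in> S)
   \<Longrightarrow> (\<And>c x. x \<in> S \<Longrightarrow> c *s x \<in> S) \<Longrightarrow> csubspace S"
  unfolding csubspace_def vec.subspace_def by blast

lemma csub_real: "csubspace (S :: 'n::finite cvec set) \<Longrightarrow> subspace S"
proof -
  assume a: "csubspace S"
  have e: "r *\<^sub>R x = complex_of_real r *s x" for r and x :: "'n cvec"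
    by (simp add: vec_eq_iff scaleR_conv_of_real[where 'a=complex])
  show ?thesis unfolding subspace_def using a csub_0 csub_add csub_scale e by metis
qed

lemma inner_cinner: "inner x y = Re (cinner x y)"
  unfolding inner_vec_def cinner_def by (simp add: inner_complex_def)

lemma cinner_add2: "cinner x (y + z) = cinner x y + cinner x z"
  unfolding cinner_def by (simp add: algebra_simps sum.distrib)
lemma cinner_diff2: "cinner x (y - z) = cinner x y - cinner x z"
  unfolding cinner_def by (simp add: algebra_simps sum_subtractf)
lemma cinner_scale2: "cinner x (c *s y) = c * cinner x y"
  unfolding cinner_def by (simp add: algebra_simps sum_distrib_left)
lemma cinner_scale1: "cinner (c *s x) y = cnj c * cinner x y"
  unfolding cinner_def by (simp add: algebra_simps sum_distrib_left)
lemma cinner_add1: "cinner (x + y) z = cinner x z + cinner y z"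
  unfolding cinner_def by (simp add: algebra_simps sum.distrib)
lemma cinner_zero1: "cinner 0 y = 0" unfolding cinner_def by simp
lemma cinner_zero2: "cinner y 0 = 0" unfolding cinner_def by simp
lemma cinner_sym: "cinner y x = cnj (cinner x y)"
  unfolding cinner_def by (simp add: mult.commute)
lemma cinner_self: "cinner x x = 0 \<Longrightarrow> x = 0"
proof -
  assume a: "cinner x x = 0"
  have "inner x x = 0" using a by (simp add: inner_cinner)
  thus ?thesis by simp
qed

lemma csub_orth: "csubspace (orth S)"
  by (rule csubI) (auto simp: orth_def cinner_add2 cinner_scale2 cinner_zero2)

lemma csub_inter: "csubspace A \<Longrightarrow> csubspace B \<Longrightarrow> csubspace (A \<inter> B)"
  by (rule csubI) (auto intro: csub_0 csub_add csub_scale)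

lemma csub_ssum: "csubspace A \<Longrightarrow> csubspace B \<Longrightarrow> csubspace (ssum A B)"
proof (rule csubI)
  assume a: "csubspace A" "csubspace B"
  show "0 \<in> ssum A B" unfolding ssum_def using a csub_0 by force
  show "x + y \<in> ssum A B" if "x \<in> ssum A B" "y \<in> ssum A B" for x y
  proof -
    from that obtain x1 x2 y1 y2 where h: "x = x1 + x2" "y = y1 + y2" "x1 \<in> A" "y1 \<in> A" "x2 \<in> B" "y2 \<in> B"
      unfolding ssum_def by blast
    have "x + y = (x1 + y1) + (x2 + y2)" using h by (simp add: algebra_simps)
    then show ?thesis unfolding ssum_def using a csub_add h by blast
  qed
  show "c *s x \<in> ssum A B" if "x \<in> ssum A B" for c x
  proof -
    from that obtain x1 x2 where h: "x = x1 + x2" "x1 \<in> A" "x2 \<in> B"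
      unfolding ssum_def by blast
    have "c *s x = c *s x1 + c *s x2" using h by (simp add: vec.scale_right_distrib)
    then show ?thesis unfolding ssum_def using a csub_scale h by blast
  qed
qed

lemma csub_sasaki: "csubspace p \<Longrightarrow> csubspace q \<Longrightarrow> csubspace (sasaki p q)"
  unfolding sasaki_def by (intro csub_inter csub_ssum csub_orth)

lemma csub_uimg: "csubspace p \<Longrightarrow> csubspace (uimg U p)"
proof (rule csubI)
  assume a: "csubspace p"
  show "0 \<in> uimg U p" unfolding uimg_def using a csub_0
    by (metis image_eqI matrix_vector_mult_0_right)
  show "x + y \<in> uimg U p" if "x \<in> uimg U p" "y \<in> uimg U p" for x y
  proof -
    from that obtain x' y' where h: "x' \<in> p" "y' \<in> p" "x = U *v x'" "y = U *v y'"
      unfolding uimg_def by blast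
    have "x + y = U *v (x' + y')" using h by (simp add: matrix_vector_right_distrib)
    then show ?thesis unfolding uimg_def using a csub_add h by blast
  qed
  show "c *s x \<in> uimg U p" if "x \<in> uimg U p" for c x
  proof -
    from that obtain x' where h: "x' \<in> p" "x = U *v x'"
      unfolding uimg_def by blast
    have "c *s x = U *v (c *s x')" using h by (simp add: vec.linear_scale[OF matrix_vector_mul_linear_gen])
    then show ?thesis unfolding uimg_def using a csub_scale h by blast
  qed
qed

lemma orth_meet: "x \<in> S \<Longrightarrow> x \<in> orth S \<Longrightarrow> x = 0"
  unfolding orth_def using cinner_self by blast

lemma decomp:
  assumes "csubspace (b :: 'n::finite cvec set)"
  obtains y z where "y \<in> b" "z \<in> orth b" "v = y + z"
proof -
  have sb: "span b = b" using csub_real[OF assms] by (simp add: span_eq_iff)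
  obtain y z where y: "y \<in> span b" and z: "\<And>w. w \<in> span b \<Longrightarrow> orthogonal z w" and v: "v = y + z"
    using orthogonal_subspace_decomp_exists by blast
  have "cinner w z = 0" if w: "w \<in> b" for w
  proof -
    have "Re (cinner z w) = 0" using z[of w] w sb
      by (simp add: orthogonal_def inner_cinner)
    then have "Re (cinner w z) = 0" by (subst cinner_sym) simp
    moreover have "Re (cinner z (\<i> *s w)) = 0" using z[of "\<i> *s w"] w sb csub_scale[OF assms]
      by (simp add: orthogonal_def inner_cinner)
    then have "Re (cinner (\<i> *s w) z) = 0" by (subst cinner_sym) simp
    ultimately show ?thesis by (simp add: cinner_scale1 complex_eq_iff)
  qed
  then show ?thesis using that y v sb unfolding orth_def by blast
qed


lemma csub_zero: "csubspace {0::'n::finite cvec}"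
  by (rule csubI) auto

lemma csub_diff: "csubspace S \<Longrightarrow> x \<in> S \<Longrightarrow> y \<in> S \<Longrightarrow> x - y \<in> S"
proof -
  assume a: "csubspace S" "x \<in> S" "y \<in> S"
  have "x - y = x + (-1) *s y" by (simp add: vec_eq_iff)
  then show ?thesis using a csub_add csub_scale by metis
qed

lemma unitary_inv: "unitary U \<Longrightarrow> U *v (matrix_inv U *v x) = x"
proof -
  assume "unitary U"
  then have "\<exists>A'. U ** A' = mat 1 \<and> A' ** U = mat 1" unfolding unitary_def by blast
  then have "U ** matrix_inv U = mat 1" unfolding matrix_inv_def by (rule someI_ex[THEN conjunct1])
  then show ?thesis by (simp add: matrix_vector_mul_assoc)
qed

theorem mainTheorem11:
  fixes uM :: "'n::finite cmat \<Rightarrow> 'm \<Rightarrow> 'm"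
    and piM :: "'n cvec set \<Rightarrow> 'm \<Rightarrow> 'm"
    and relM :: "'m \<Rightarrow> 'n cvec set \<Rightarrow> bool"
    and \<kappa> :: "'m \<Rightarrow> 'n cvec set"
  assumes "CARD('n) \<ge> 3"
    and "PQM_model uM piM relM"
    and "\<forall>m. csubspace (\<kappa> m)"
    and "\<forall>m p. csubspace p \<longrightarrow> (relM m p \<longleftrightarrow> \<kappa> m \<subseteq> p)"
  shows "\<forall>m. (\<forall>p. csubspace p \<longrightarrow> (relM m p \<longleftrightarrow> \<kappa> m \<subseteq> p))
            \<and> (\<forall>q. csubspace q \<longrightarrow> \<kappa> (piM q m) = sasaki (\<kappa> m) q)
            \<and> (\<forall>U. unitary U \<longrightarrow> \<kappa> (uM U m) = uimg U (\<kappa> m))"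
proof (intro allI conjI impI)
  have K: "\<And>m. csubspace (\<kappa> m)" using assms(3) by blast
  have R: "\<And>m p. csubspace p \<Longrightarrow> relM m p \<longleftrightarrow> \<kappa> m \<subseteq> p" using assms(4) by blast
  have Rs: "\<And>m. relM m (\<kappa> m)" using R K by blast
  have Api: "\<And>p q x. csubspace p \<Longrightarrow> csubspace q \<Longrightarrow> relM x p \<Longrightarrow> relM (piM q x) (sasaki p q)"
    and Apc: "\<And>p q x. csubspace p \<Longrightarrow> csubspace q \<Longrightarrow> p \<subseteq> q \<Longrightarrow> relM (piM p (piM q x)) {0}
        \<Longrightarrow> relM (piM p x) {0}"
    and Apb: "\<And>q x. csubspace q \<Longrightarrow> relM (piM q x) {0} \<Longrightarrow> relM x (orth q)"
    and Aui: "\<And>U p x. unitary U \<Longrightarrow> csubspace p \<Longrightarrow> relM x p \<Longrightarrow> relM (uM U x) (uimg U p)"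
    and Aue: "\<And>U p x. unitary U \<Longrightarrow> csubspace p \<Longrightarrow> relM (uM U x) p \<Longrightarrow> relM x (uimg (matrix_inv U) p)"
    using assms(2) unfolding PQM_model_def by blast+
  fix m
  show "relM m p \<longleftrightarrow> \<kappa> m \<subseteq> p" if "csubspace p" for p using R that .
  show "\<kappa> (uM U m) = uimg U (\<kappa> m)" if U: "unitary U" for U
  proof
    show "\<kappa> (uM U m) \<subseteq> uimg U (\<kappa> m)"
      using Aui[OF U K Rs] R csub_uimg K by blast
    have "\<kappa> m \<subseteq> uimg (matrix_inv U) (\<kappa> (uM U m))"
      using Aue[OF U K Rs] R csub_uimg K by blast
    then show "uimg U (\<kappa> m) \<subseteq> \<kappa> (uM U m)"
      unfolding uimg_def using unitary_inv[OF U] by auto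
  qed
  show "\<kappa> (piM q m) = sasaki (\<kappa> m) q" if q: "csubspace q" for q
  proof
    define a where "a = \<kappa> m"
    define b where "b = \<kappa> (piM q m)"
    have ka: "csubspace a" and kb: "csubspace b" unfolding a_def b_def using K by auto
    show bs: "\<kappa> (piM q m) \<subseteq> sasaki (\<kappa> m) q"
      using Api[OF K q Rs] R csub_sasaki K q by blast
    then have bq: "b \<subseteq> q" unfolding b_def sasaki_def by blast
    define p where "p = q \<inter> orth b"
    have kp: "csubspace p" unfolding p_def using q csub_orth csub_inter by blast
    have pq: "p \<subseteq> q" unfolding p_def by blast
    have bop: "b \<subseteq> orth p"
    proof
      fix u assume u: "u \<in> b"
      have "cinner y u = 0" if "y \<in> p" for y
      proof -
        have "cinner u y = 0" using that u unfolding p_def orth_def by blast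
        then show ?thesis by (subst cinner_sym) simp
      qed
      then show "u \<in> orth p" unfolding orth_def by blast
    qed
    have "sasaki b p \<subseteq> {0}"
    proof
      fix x assume "x \<in> sasaki b p"
      then obtain w u where x: "x \<in> p" "x = w + u" "w \<in> orth p" "u \<in> b"
        unfolding sasaki_def ssum_def by blast
      then have "x \<in> orth p" using bop csub_add csub_orth by blast
      then show "x \<in> {0}" using orth_meet x(1) by blast
    qed
    moreover have "\<kappa> (piM p (piM q m)) \<subseteq> sasaki b p"
      using Api[OF kb kp, of "piM q m"] Rs R csub_sasaki kb kp unfolding b_def by blast
    ultimately have "relM (piM p (piM q m)) {0}" using R csub_zero by blast
    then have "relM (piM p m) {0}" using Apc[OF kp q pq] by blast
    then have "relM m (orth p)" using Apb[OF kp] by blast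
    then have aop: "a \<subseteq> orth p" using R csub_orth unfolding a_def by blast
    show "sasaki (\<kappa> m) q \<subseteq> \<kappa> (piM q m)"
    proof
      fix v assume "v \<in> sasaki (\<kappa> m) q"
      then obtain w u where v: "v \<in> q" "v = w + u" "w \<in> orth q" "u \<in> a"
        unfolding sasaki_def ssum_def a_def by blast
      obtain vb v' where d: "vb \<in> b" "v' \<in> orth b" "v = vb + v'" using decomp[OF kb] by blast
      have "vb \<in> q" using d bq by blast
      then have "v' \<in> q" using csub_diff[OF q v(1)] d(3) by (metis add_diff_cancel_left')
      then have v'p: "v' \<in> p" unfolding p_def using d by blast
      have c1: "cinner v' u = 0" using aop v'p v(4) unfolding orth_def by blast
      have c2: "cinner v' w = 0" using \<open>v' \<in> q\<close> v(3) unfolding orth_def by blast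
      have "cinner vb v' = 0" using d unfolding orth_def by blast
      then have c3: "cinner v' vb = 0" by (subst cinner_sym) simp
      have "cinner v' v' = cinner v' (v - vb)" using d(3) by simp
      also have "\<dots> = cinner v' w + cinner v' u - cinner v' vb"
        using v(2) by (simp add: cinner_diff2 cinner_add2)
      also have "\<dots> = 0" using c1 c2 c3 by simp
      finally have "v' = 0" by (rule cinner_self)
      then show "v \<in> \<kappa> (piM q m)" using d unfolding b_def by simp
    qed
  qed
qed

end
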